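(* Let $\Sigma$ be a ranked alphabet, $B$ a strong bimonoid and $\mathcal{A}$ a bottom-up deterministic $(\Sigma,B)$-weighted tree automaton. Then $[\![\mathcal{A}]\!]^{\mathrm{init}}=[\![\mathcal{A}]\!]^{\mathrm{run}}$.
   Context: A ranked alphabet is a finite nonempty set $\Sigma$ with a rank map $\mathrm{rk}:\Sigma\to\mathbb{N}$; $\Sigma^{(k)}=\{\sigma\mid \mathrm{rk}(\sigma)=k\}$, and it is assumed that $\Sigma^{(0)}\neq\emptyset$. $T_\Sigma$ is the set of $\Sigma$-trees: the smallest set containing $\Sigma^{(0)}$ and containing $\sigma(\xi_1,\dots,\xi_k)$ whenever $k\ge 1$, $\sigma\in\Sigma^{(k)}$, $\xi_1,\dots,\xi_k\in T_\Sigma$ (for $k=0$ we write $\sigma$ for $\sigma()$). Positions: $\mathrm{pos}(\alpha)=\{\varepsilon\}$ for $\alpha\in\Sigma^{(0)}$, $\mathrm{pos}(\sigma(\xi_1,\dots,\xi_k))=\{\varepsilon\}\cup\{iv\mid i\in[k], v\in\mathrm{pos}(\xi_i)\}$. A strong bimonoid $(B,\oplus,\otimes,\mathbb{0},\mathbb{1})$ consists of a commutative monoid $(B,\oplus,\mathbb{0})$ and a (not necessarily commutative) monoid $(B,\otimes,\mathbb{1})$ with $\mathbb{0}\neq\mathbb{1}$ and $b\otimes\mathbb{0}=\mathbb{0}\otimes b=\mathbb{0}$ for all $b$; no distributivity is assumed. $\bigotimes_{i=1}^k a_i=a_1\otimes\cdots\otimes a_k$ in this order ($\mathbb{1}$ if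 $k=0$), and $\bigoplus$ over a finite index set is the iterated sum ($\mathbb{0}$ if empty). A $(\Sigma,B)$-weighted tree automaton (wta) is $\mathcal{A}=(Q,\delta,F)$ with $Q$ a finite nonempty set, $\delta=(\delta_k)_{k\in\mathbb{N}}$ with $\delta_k:Q^k\times\Sigma^{(k)}\times Q\to B$ (written $\delta_k(q_1\dots q_k,\sigma,q)$), and $F:Q\to B$. The vector algebra of $\mathcal{A}$ is the $\Sigma$-algebra $(B^Q,\delta_{\mathcal{A}})$ with $\delta_{\mathcal{A}}(\sigma)(v_1,\dots,v_k)_q=\bigoplus_{q_1,\dots,q_k\in Q}\big(\bigotimes_{i=1}^k (v_i)_{q_i}\big)\otimes\delta_k(q_1\dots q_k,\sigma,q)$. Let $h_{\mathrm{V}(\mathcal{A})}:T_\Sigma\to B^Q$ be defined by $h_{\mathrm{V}(\mathcal{A})}(\sigma(\xi_1,\dots,\xi_k))=\delta_{\mathcal{A}}(\sigma)(h_{\mathrm{V}(\mathcal{A})}(\xi_1),\dots,h_{\mathrm{V}(\mathcal{A})}(\xi_k))$. The initial algebra semantics is $[\![\mathcal{A}]\!]^{\mathrm{init}}(\xi)=\bigoplus_{q\in Q}h_{\mathrm{V}(\mathcal{A})}(\xi)_q\otimes F_q$. A run of $\mathcal{A}$ on $\xi$ is a map $\rho:\mathrm{pos}(\xi)\to Q$; $R_{\mathcal{A}}(\xi)$ is the set of runs on $\xi$; $\rho|_i$ is the run on $\xi_i$ given by $\rho|_i(w)=\rho(iw)$. For $\xi=\sigma(\xi_1,\dots,\xi_k)$,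 $\mathrm{wt}_{\mathcal{A}}(\rho)=\big(\bigotimes_{i=1}^k\mathrm{wt}_{\mathcal{A}}(\rho|_i)\big)\otimes\delta_k(\rho(1)\dots\rho(k),\sigma,\rho(\varepsilon))$. The run semantics is $[\![\mathcal{A}]\!]^{\mathrm{run}}(\xi)=\bigoplus_{\rho\in R_{\mathcal{A}}(\xi)}\mathrm{wt}_{\mathcal{A}}(\rho)\otimes F_{\rho(\varepsilon)}$. $\mathcal{A}$ is bottom-up deterministic if for all $k$, $\sigma\in\Sigma^{(k)}$, $q_1,\dots,q_k\in Q$ there is at most one $q\in Q$ with $\delta_k(q_1\dots q_k,\sigma,q)\neq\mathbb{0}$. *)

theory Defs
  imports "HOL-Library.FuncSet"
begin

text \<open>Trees over an alphabet of type 'f; the ranked alphabet is the finite type 'f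
  together with a rank map rk. Children are indexed 0,...,k-1 (instead of 1..k).\<close>

datatype 'f tree = Node 'f "'f tree list"

lemma size_nth_less: "i < length ts \<Longrightarrow> size (ts ! i) < Suc (size_list size ts)"
  using size_list_estimation'[of "ts ! i" ts "size (ts ! i)" size] nth_mem[of i ts] by simp

inductive wf_tree :: "('f \<Rightarrow> nat) \<Rightarrow> 'f tree \<Rightarrow> bool" for rk where
  "length ts = rk \<sigma> \<Longrightarrow> (\<forall>t\<in>set ts. wf_tree rk t) \<Longrightarrow> wf_tree rk (Node \<sigma> ts)"

function pos :: "'f tree \<Rightarrow> nat list set" where
  "pos (Node \<sigma> ts) = {[]} \<union> (\<Union>i\<in>{..<length ts}. (\<lambda>v. i # v) ` pos (ts ! i))"
  by pat_completeness auto
termination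
  by (relation "measure size") (auto intro: size_nth_less)

text \<open>Strong bimonoid: comm_monoid_add, monoid_mult, absorbing zero, zero \<noteq> one
  (no distributivity). Transition weights: delta qs \<sigma> q = \<delta>_k(q_1...q_k,\<sigma>,q).\<close>

definition vec_alg ::
  "('q::finite list \<Rightarrow> 'f \<Rightarrow> 'q \<Rightarrow> 'b::{comm_monoid_add,monoid_mult,mult_zero,zero_neq_one})
   \<Rightarrow> 'f \<Rightarrow> ('q \<Rightarrow> 'b) list \<Rightarrow> 'q \<Rightarrow> 'b" where
  "vec_alg \<delta> \<sigma> vs q =
     (\<Sum>qs\<in>{qs. length qs = length vs}. prod_list (map2 (\<lambda>v q'. v q') vs qs) * \<delta> qs \<sigma> q)"

fun hV ::
  "('q::finite list \<Rightarrow> 'f \<Rightarrow> 'q \<Rightarrow> 'b::{comm_monoid_add,monoid_mult,mult_zero,zero_neq_one})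
   \<Rightarrow> 'f tree \<Rightarrow> 'q \<Rightarrow> 'b" where
  "hV \<delta> (Node \<sigma> ts) = vec_alg \<delta> \<sigma> (map (hV \<delta>) ts)"

definition sem_init ::
  "('q::finite list \<Rightarrow> 'f \<Rightarrow> 'q \<Rightarrow> 'b::{comm_monoid_add,monoid_mult,mult_zero,zero_neq_one})
   \<Rightarrow> ('q \<Rightarrow> 'b) \<Rightarrow> 'f tree \<Rightarrow> 'b" where
  "sem_init \<delta> F \<xi> = (\<Sum>q\<in>UNIV. hV \<delta> \<xi> q * F q)"

definition runs :: "'f tree \<Rightarrow> (nat list \<Rightarrow> 'q) set" where
  "runs \<xi> = PiE (pos \<xi>) (\<lambda>_. UNIV)"

function wt ::
  "('q::finite list \<Rightarrow> 'f \<Rightarrow> 'q \<Rightarrow> 'b::{comm_monoid_add,monoid_mult,mult_zero,zero_neq_one})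
   \<Rightarrow> 'f tree \<Rightarrow> (nat list \<Rightarrow> 'q) \<Rightarrow> 'b" where
  "wt \<delta> (Node \<sigma> ts) \<rho> =
     prod_list (map (\<lambda>i. wt \<delta> (ts ! i) (\<lambda>w. \<rho> (i # w))) [0..<length ts])
     * \<delta> (map (\<lambda>i. \<rho> [i]) [0..<length ts]) \<sigma> (\<rho> [])"
  by pat_completeness auto
termination
  by (relation "measure (\<lambda>(_, t, _). size t)")
     (auto intro: size_nth_less)

definition sem_run ::
  "('q::finite list \<Rightarrow> 'f \<Rightarrow> 'q \<Rightarrow> 'b::{comm_monoid_add,monoid_mult,mult_zero,zero_neq_one})
   \<Rightarrow> ('q \<Rightarrow> 'b) \<Rightarrow> 'f tree \<Rightarrow> 'b" where
  "sem_run \<delta> F \<xi> = (\<Sum>\<rho>\<in>runs \<xi>. wt \<delta> \<xi> \<rho> * F (\<rho> []))"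

definition bu_det ::
  "('f \<Rightarrow> nat) \<Rightarrow> ('q list \<Rightarrow> 'f \<Rightarrow> 'q \<Rightarrow> 'b::zero) \<Rightarrow> bool" where
  "bu_det rk \<delta> \<longleftrightarrow> (\<forall>\<sigma> qs. length qs = rk \<sigma> \<longrightarrow>
      (\<forall>q q'. \<delta> qs \<sigma> q \<noteq> 0 \<and> \<delta> qs \<sigma> q' \<noteq> 0 \<longrightarrow> q = q'))"

end

theory Submission
  imports Defs
begin

lemma prod_list_z:
  "(0::'b::{monoid_mult,mult_zero}) \<in> set xs \<Longrightarrow> prod_list xs = 0"
  by (induction xs) auto

lemma prod_list_nz:
  "prod_list (xs :: 'b::{monoid_mult,mult_zero} list) \<noteq> 0 \<Longrightarrow> x \<in> set xs \<Longrightarrow> x \<noteq> 0"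
  using prod_list_z by blast

lemma pos_Cons: "(i # w \<in> pos (Node \<sigma> ts)) = (i < length ts \<and> w \<in> pos (ts ! i))"
  by auto

lemma nil_pos: "[] \<in> pos t"
  by (cases t) auto

lemma runs_child:
  assumes "\<rho> \<in> runs (Node \<sigma> ts)" "i < length ts"
  shows "(\<lambda>w. \<rho> (i # w)) \<in> runs (ts ! i)"
  using assms unfolding runs_def PiE_def extensional_def
  by (auto simp del: pos.simps simp: pos_Cons)

lemma runs_eq:
  assumes "\<rho> \<in> runs (Node \<sigma> ts)" "\<rho>' \<in> runs (Node \<sigma> ts)" "\<rho> [] = \<rho>' []"
    "\<forall>i<length ts. (\<lambda>w. \<rho> (i # w)) = (\<lambda>w. \<rho>' (i # w))"
  shows "\<rho> = \<rho>'"
proof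
  fix w
  show "\<rho> w = \<rho>' w"
  proof (cases "w \<in> pos (Node \<sigma> ts)")
    case True
    then show ?thesis
    proof (cases w)
      case Nil then show ?thesis using assms by simp
    next
      case (Cons i v)
      then have "i < length ts" using True by (simp only: pos_Cons)
      then show ?thesis using assms(4) Cons by metis
    qed
  next
    case False
    then show ?thesis using assms(1,2) unfolding runs_def PiE_def extensional_def by auto
  qed
qed

lemma runs_build:
  fixes q :: 'q
  assumes "\<forall>i<length ts. \<rho>s i \<in> runs (ts ! i)"
  defines "\<rho> \<equiv> (\<lambda>w. case w of [] \<Rightarrow> q | i # v \<Rightarrow>
      (if i < length ts \<and> v \<in> pos (ts ! i) then \<rho>s i v else undefined))"
  shows "\<rho> \<in> runs (Node \<sigma> ts)" "\<rho> [] = q" "\<forall>i<length ts. (\<lambda>w. \<rho> (i # w)) = \<rho>s i"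
proof -
  show "\<rho> \<in> runs (Node \<sigma> ts)"
    unfolding runs_def PiE_def extensional_def
  proof (intro IntI CollectI allI impI)
    fix w assume "w \<notin> pos (Node \<sigma> ts)"
    then show "\<rho> w = undefined"
      unfolding \<rho>_def by (cases w) (auto simp del: pos.simps simp add: pos_Cons nil_pos)
  qed simp
  show "\<rho> [] = q" unfolding \<rho>_def by simp
  show "\<forall>i<length ts. (\<lambda>w. \<rho> (i # w)) = \<rho>s i"
  proof (intro allI impI ext)
    fix i w assume i: "i < length ts"
    show "\<rho> (i # w) = \<rho>s i w"
    proof (cases "w \<in> pos (ts ! i)")
      case True then show ?thesis using i unfolding \<rho>_def by simp
    next
      case False
      have "\<rho>s i \<in> runs (ts ! i)" using assms(1) i by blast
      then have "\<rho>s i w = undefined" using False unfolding runs_def PiE_def extensional_def by blast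
      then show ?thesis using i False unfolding \<rho>_def by simp
    qed
  qed
qed
lemma map2_nth: "length xs = length ys \<Longrightarrow>
   map2 f xs ys = map (\<lambda>i. f (xs ! i) (ys ! i)) [0..<length xs]"
  by (rule nth_equalityI) auto

lemma wt_Node: "wt \<delta> (Node \<sigma> ts) \<rho> =
     prod_list (map (\<lambda>i. wt \<delta> (ts ! i) (\<lambda>w. \<rho> (i # w))) [0..<length ts])
     * \<delta> (map (\<lambda>i. \<rho> [i]) [0..<length ts]) \<sigma> (\<rho> [])"
  by (rule wt.simps)
lemma hV_Node:
  fixes \<delta> :: "'q::finite list \<Rightarrow> 'f \<Rightarrow> 'q \<Rightarrow> 'b::{comm_monoid_add,monoid_mult,mult_zero,zero_neq_one}"
  shows "hV \<delta> (Node \<sigma> ts) q =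
  (\<Sum>qs\<in>{qs. length qs = length ts}.
     prod_list (map (\<lambda>i. hV \<delta> (ts ! i) (qs ! i)) [0..<length ts]) * \<delta> qs \<sigma> q)"
proof -
  have "hV \<delta> (Node \<sigma> ts) q = vec_alg \<delta> \<sigma> (map (hV \<delta>) ts) q" by (simp only: hV.simps)
  also have "\<dots> = (\<Sum>qs\<in>{qs. length qs = length ts}.
     prod_list (map2 (\<lambda>v q'. v q') (map (hV \<delta>) ts) (qs::'q list)) * \<delta> qs \<sigma> q)"
    by (simp only: vec_alg_def length_map)
  also have "\<dots> = (\<Sum>qs\<in>{qs. length qs = length ts}.
     prod_list (map (\<lambda>i. hV \<delta> (ts ! i) (qs ! i)) [0..<length ts]) * \<delta> qs \<sigma> q)"
  proof (rule sum.cong)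
    fix qs :: "'q list" assume "qs \<in> {qs. length qs = length ts}"
    then have "map2 (\<lambda>v q'. v q') (map (hV \<delta>) ts) qs = map (\<lambda>i. hV \<delta> (ts ! i) (qs ! i)) [0..<length ts]"
      by (subst map2_nth) auto
    then show "prod_list (map2 (\<lambda>v q'. v q') (map (hV \<delta>) ts) qs) * \<delta> qs \<sigma> q =
       prod_list (map (\<lambda>i. hV \<delta> (ts ! i) (qs ! i)) [0..<length ts]) * \<delta> qs \<sigma> q" by simp
  qed simp
  finally show ?thesis .
qed

declare wt.simps[simp del] hV.simps[simp del]

lemma main:
  fixes \<delta> :: "'q::finite list \<Rightarrow> 'f \<Rightarrow> 'q \<Rightarrow> 'b::{comm_monoid_add,monoid_mult,mult_zero,zero_neq_one}"
  assumes det: "bu_det rk \<delta>" and wf: "wf_tree rk \<xi>"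
  shows "(\<forall>\<rho>\<in>runs \<xi>. \<forall>\<rho>'\<in>runs \<xi>. wt \<delta> \<xi> \<rho> \<noteq> 0 \<longrightarrow> wt \<delta> \<xi> \<rho>' \<noteq> 0 \<longrightarrow> \<rho> = \<rho>') \<and>
    (\<forall>\<rho>\<in>runs \<xi>. wt \<delta> \<xi> \<rho> \<noteq> 0 \<longrightarrow> hV \<delta> \<xi> (\<rho> []) = wt \<delta> \<xi> \<rho>) \<and>
    (\<forall>q. hV \<delta> \<xi> q \<noteq> 0 \<longrightarrow> (\<exists>\<rho>\<in>runs \<xi>. wt \<delta> \<xi> \<rho> \<noteq> 0 \<and> \<rho> [] = q))"
  using wf
proof (induction rule: wf_tree.induct)
  case (1 ts \<sigma>)
  let ?k = "length ts"
  let ?r = "\<lambda>\<rho> i. (\<lambda>w. \<rho> (i # w))"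
  have IH: "
    (\<forall>\<rho>\<in>runs (ts!i). \<forall>\<rho>'\<in>runs (ts!i). wt \<delta> (ts!i) \<rho> \<noteq> 0 \<longrightarrow> wt \<delta> (ts!i) \<rho>' \<noteq> 0 \<longrightarrow> \<rho> = \<rho>') \<and>
    (\<forall>\<rho>\<in>runs (ts!i). wt \<delta> (ts!i) \<rho> \<noteq> 0 \<longrightarrow> hV \<delta> (ts!i) (\<rho> []) = wt \<delta> (ts!i) \<rho>) \<and>
    (\<forall>q. hV \<delta> (ts!i) q \<noteq> 0 \<longrightarrow> (\<exists>\<rho>\<in>runs (ts!i). wt \<delta> (ts!i) \<rho> \<noteq> 0 \<and> \<rho> [] = q))"
    if "i < ?k" for i
  proof -
    have "ts ! i \<in> set ts" using that by simp
    then show ?thesis using 1(2) by blast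
  qed
  have child_nz: "wt \<delta> (ts ! i) (?r \<rho> i) \<noteq> 0"
    if "wt \<delta> (Node \<sigma> ts) \<rho> \<noteq> 0" "i < ?k" for \<rho> i
  proof -
    have "prod_list (map (\<lambda>i. wt \<delta> (ts ! i) (?r \<rho> i)) [0..<?k]) \<noteq> 0"
      using that(1) unfolding wt_Node by auto
    then show ?thesis using prod_list_nz that(2) by fastforce
  qed
  have delta_nz: "\<delta> (map (\<lambda>i. \<rho> [i]) [0..<?k]) \<sigma> (\<rho> []) \<noteq> 0"
    if "wt \<delta> (Node \<sigma> ts) \<rho> \<noteq> 0" for \<rho>
    using that unfolding wt_Node by auto
  have U: "\<forall>\<rho>\<in>runs (Node \<sigma> ts). \<forall>\<rho>'\<in>runs (Node \<sigma> ts). wt \<delta> (Node \<sigma> ts) \<rho> \<noteq> 0 \<longrightarrow>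
      wt \<delta> (Node \<sigma> ts) \<rho>' \<noteq> 0 \<longrightarrow> \<rho> = \<rho>'"
  proof (intro ballI impI)
    fix \<rho> \<rho>' assume r: "\<rho> \<in> runs (Node \<sigma> ts)" "\<rho>' \<in> runs (Node \<sigma> ts)"
      and nz: "wt \<delta> (Node \<sigma> ts) \<rho> \<noteq> 0" "wt \<delta> (Node \<sigma> ts) \<rho>' \<noteq> 0"
    have ch: "\<forall>i<?k. ?r \<rho> i = ?r \<rho>' i"
    proof (intro allI impI)
      fix i assume i: "i < ?k"
      show "?r \<rho> i = ?r \<rho>' i"
        using IH[OF i] runs_child[OF r(1) i] runs_child[OF r(2) i] child_nz[OF nz(1) i] child_nz[OF nz(2) i]
        by blast
    qed
    then have "map (\<lambda>i. \<rho> [i]) [0..<?k] = map (\<lambda>i. \<rho>' [i]) [0..<?k]"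
      by (auto dest: fun_cong[where x="[]"])
    then have "\<rho> [] = \<rho>' []"
      using det delta_nz[OF nz(1)] delta_nz[OF nz(2)] 1(1) unfolding bu_det_def by (metis (no_types) diff_zero length_map length_upt)
    then show "\<rho> = \<rho>'" using runs_eq[OF r] ch by blast
  qed
  have H: "\<forall>\<rho>\<in>runs (Node \<sigma> ts). wt \<delta> (Node \<sigma> ts) \<rho> \<noteq> 0 \<longrightarrow> hV \<delta> (Node \<sigma> ts) (\<rho> []) = wt \<delta> (Node \<sigma> ts) \<rho>"
  proof (intro ballI impI)
    fix \<rho> assume r: "\<rho> \<in> runs (Node \<sigma> ts)" and nz: "wt \<delta> (Node \<sigma> ts) \<rho> \<noteq> 0"
    define ps where "ps = map (\<lambda>i. \<rho> [i]) [0..<?k]"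
    let ?g = "\<lambda>qs. prod_list (map (\<lambda>i. hV \<delta> (ts ! i) (qs ! i)) [0..<?k]) * \<delta> qs \<sigma> (\<rho> [])"
    have fin: "finite {qs::'q list. length qs = ?k}" using finite_lists_length_eq[OF finite_UNIV[where 'a='q], of ?k] by simp
    have psin: "ps \<in> {qs. length qs = ?k}" unfolding ps_def by simp
    have zero: "?g qs = 0" if "qs \<in> {qs. length qs = ?k} - {ps}" for qs
    proof -
      from that have len: "length qs = ?k" and ne: "qs \<noteq> ps" by auto
      then obtain i where i: "i < ?k" and nei: "qs ! i \<noteq> \<rho> [i]"
        unfolding ps_def by (metis (no_types, lifting) add_0 diff_zero length_map length_upt nth_equalityI nth_map_upt)
      have "hV \<delta> (ts ! i) (qs ! i) = 0"
      proof (rule ccontr)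
        assume "hV \<delta> (ts ! i) (qs ! i) \<noteq> 0"
        then obtain \<rho>' where "\<rho>' \<in> runs (ts ! i)" "wt \<delta> (ts ! i) \<rho>' \<noteq> 0" "\<rho>' [] = qs ! i"
          using IH[OF i] by blast
        then have "\<rho>' = ?r \<rho> i"
          using IH[OF i] runs_child[OF r i] child_nz[OF nz i] by blast
        then show False using nei \<open>\<rho>' [] = qs ! i\<close> by simp
      qed
      then have "prod_list (map (\<lambda>i. hV \<delta> (ts ! i) (qs ! i)) [0..<?k]) = 0"
        using i by (intro prod_list_z) force
      then show ?thesis by simp
    qed
    have "hV \<delta> (Node \<sigma> ts) (\<rho> []) = sum ?g {qs. length qs = ?k}" by (rule hV_Node)
    also have "\<dots> = ?g ps + sum ?g ({qs. length qs = ?k} - {ps})"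
      by (rule sum.remove[OF fin psin])
    also have "sum ?g ({qs. length qs = ?k} - {ps}) = 0"
      using zero by (intro sum.neutral) blast
    also have "map (\<lambda>i. hV \<delta> (ts ! i) (ps ! i)) [0..<?k] = map (\<lambda>i. wt \<delta> (ts ! i) (?r \<rho> i)) [0..<?k]"
    proof (rule map_cong[OF refl])
      fix i assume "i \<in> set [0..<?k]"
      then have i: "i < ?k" by simp
      have "hV \<delta> (ts ! i) (?r \<rho> i []) = wt \<delta> (ts ! i) (?r \<rho> i)"
        using IH[OF i] runs_child[OF r i] child_nz[OF nz i] by blast
      then show "hV \<delta> (ts ! i) (ps ! i) = wt \<delta> (ts ! i) (?r \<rho> i)"
        using i unfolding ps_def by simp
    qed
    finally show "hV \<delta> (Node \<sigma> ts) (\<rho> []) = wt \<delta> (Node \<sigma> ts) \<rho>"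
      unfolding wt_Node ps_def by simp
  qed
  have E: "\<forall>q. hV \<delta> (Node \<sigma> ts) q \<noteq> 0 \<longrightarrow> (\<exists>\<rho>\<in>runs (Node \<sigma> ts). wt \<delta> (Node \<sigma> ts) \<rho> \<noteq> 0 \<and> \<rho> [] = q)"
  proof (intro allI impI)
    fix q assume hq: "hV \<delta> (Node \<sigma> ts) q \<noteq> 0"
    let ?g = "\<lambda>qs. prod_list (map (\<lambda>i. hV \<delta> (ts ! i) (qs ! i)) [0..<?k]) * \<delta> qs \<sigma> q"
    have "sum ?g {qs. length qs = ?k} \<noteq> 0" using hq unfolding hV_Node .
    then have "\<exists>qs\<in>{qs. length qs = ?k}. ?g qs \<noteq> 0"
      by (rule sum.not_neutral_contains_not_neutral) blast
    then obtain qs where qs: "length qs = ?k" and gnz: "?g qs \<noteq> 0" by blast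
    have pnz: "prod_list (map (\<lambda>i. hV \<delta> (ts ! i) (qs ! i)) [0..<?k]) \<noteq> 0" using gnz by auto
    have "\<forall>i. \<exists>\<rho>'. i < ?k \<longrightarrow> \<rho>' \<in> runs (ts ! i) \<and> wt \<delta> (ts ! i) \<rho>' \<noteq> 0 \<and> \<rho>' [] = qs ! i"
    proof
      fix i
      show "\<exists>\<rho>'. i < ?k \<longrightarrow> \<rho>' \<in> runs (ts ! i) \<and> wt \<delta> (ts ! i) \<rho>' \<noteq> 0 \<and> \<rho>' [] = qs ! i"
      proof (cases "i < ?k")
        case True
        then have "hV \<delta> (ts ! i) (qs ! i) \<noteq> 0" using prod_list_nz[OF pnz] by fastforce
        then show ?thesis using IH[OF True] by blast
      qed simp
    qed
    from choice[OF this] obtain \<rho>s where rs0: "\<forall>i. i < ?k \<longrightarrow> \<rho>s i \<in> runs (ts ! i) \<and> wt \<delta> (ts ! i) (\<rho>s i) \<noteq> 0 \<and> \<rho>s i [] = qs ! i"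
      by blast
    have rs: "\<rho>s i \<in> runs (ts ! i)" "wt \<delta> (ts ! i) (\<rho>s i) \<noteq> 0" "\<rho>s i [] = qs ! i" if "i < ?k" for i
      using rs0 that by blast+
    define \<rho> where "\<rho> \<equiv> (\<lambda>w. case w of [] \<Rightarrow> q | i # v \<Rightarrow>
      (if i < length ts \<and> v \<in> pos (ts ! i) then \<rho>s i v else undefined))"
    have b: "\<rho> \<in> runs (Node \<sigma> ts)" "\<rho> [] = q" "\<forall>i<length ts. (\<lambda>w. \<rho> (i # w)) = \<rho>s i"
      using runs_build[where ts=ts and \<rho>s=\<rho>s and q=q] rs(1) unfolding \<rho>_def by blast+
    have ri: "?r \<rho> i = \<rho>s i" if "i < ?k" for i using b(3) that by blast
    have m1: "map (\<lambda>i. \<rho> [i]) [0..<?k] = qs"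
    proof (rule nth_equalityI)
      show "length (map (\<lambda>i. \<rho> [i]) [0..<?k]) = length qs" using qs by simp
      fix i assume "i < length (map (\<lambda>i. \<rho> [i]) [0..<?k])"
      then have i: "i < ?k" by simp
      have eq: "\<rho> [i] = qs ! i" using fun_cong[OF ri[OF i], of "[]"] rs(3)[OF i] by simp
      show "map (\<lambda>i. \<rho> [i]) [0..<?k] ! i = qs ! i" using i eq by simp
    qed
    have m2: "map (\<lambda>i. wt \<delta> (ts ! i) (?r \<rho> i)) [0..<?k] = map (\<lambda>i. hV \<delta> (ts ! i) (qs ! i)) [0..<?k]"
    proof (rule map_cong[OF refl])
      fix i assume "i \<in> set [0..<?k]"
      then have i: "i < ?k" by simp
      have "hV \<delta> (ts ! i) (\<rho>s i []) = wt \<delta> (ts ! i) (\<rho>s i)"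
        using IH[OF i] rs[OF i] by blast
      then show "wt \<delta> (ts ! i) (?r \<rho> i) = hV \<delta> (ts ! i) (qs ! i)"
        using ri[OF i] rs(3)[OF i] by simp
    qed
    have "wt \<delta> (Node \<sigma> ts) \<rho> = ?g qs" by (simp only: wt_Node m1 m2 b(2))
    then have "wt \<delta> (Node \<sigma> ts) \<rho> \<noteq> 0" using gnz by simp
    then show "\<exists>\<rho>\<in>runs (Node \<sigma> ts). wt \<delta> (Node \<sigma> ts) \<rho> \<noteq> 0 \<and> \<rho> [] = q" using b by blast
  qed
  show ?case using U H E by blast
qed


lemma finite_pos: "finite (pos t)"
proof (induction t rule: pos.induct)
  case (1 \<sigma> ts)
  then show ?case by (simp del: pos.simps add: pos.simps[of \<sigma> ts])
qed

lemma finite_runs: "finite (runs (\<xi> :: 'f tree) :: (nat list \<Rightarrow> 'q::finite) set)"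
  unfolding runs_def by (intro finite_PiE finite_pos) simp

theorem theorem3p6:
  fixes rk :: "'f::finite \<Rightarrow> nat"
    and \<delta> :: "'q::finite list \<Rightarrow> 'f \<Rightarrow> 'q \<Rightarrow> 'b::{comm_monoid_add,monoid_mult,mult_zero,zero_neq_one}"
    and F :: "'q \<Rightarrow> 'b"
  assumes "\<exists>\<sigma>. rk \<sigma> = 0"
    and "bu_det rk \<delta>"
    and "wf_tree rk \<xi>"
  shows "sem_init \<delta> F \<xi> = sem_run \<delta> F \<xi>"
proof -
  note M = main[OF assms(2,3)]
  show ?thesis
  proof (cases "\<exists>\<rho>0\<in>runs \<xi>. wt \<delta> \<xi> \<rho>0 \<noteq> 0")
    case True
    then obtain \<rho>0 where r0: "\<rho>0 \<in> runs \<xi>" "wt \<delta> \<xi> \<rho>0 \<noteq> 0" by blast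
    have "sem_run \<delta> F \<xi> = wt \<delta> \<xi> \<rho>0 * F (\<rho>0 [])
        + (\<Sum>\<rho>\<in>runs \<xi> - {\<rho>0}. wt \<delta> \<xi> \<rho> * F (\<rho> []))"
      unfolding sem_run_def by (rule sum.remove[OF finite_runs r0(1)])
    also have "(\<Sum>\<rho>\<in>runs \<xi> - {\<rho>0}. wt \<delta> \<xi> \<rho> * F (\<rho> [])) = 0"
    proof (rule sum.neutral, rule ballI)
      fix \<rho> assume "\<rho> \<in> runs \<xi> - {\<rho>0}"
      then have "wt \<delta> \<xi> \<rho> = 0" using M r0 by blast
      then show "wt \<delta> \<xi> \<rho> * F (\<rho> []) = 0" by simp
    qed
    finally have R: "sem_run \<delta> F \<xi> = wt \<delta> \<xi> \<rho>0 * F (\<rho>0 [])" by simp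
    have "sem_init \<delta> F \<xi> = hV \<delta> \<xi> (\<rho>0 []) * F (\<rho>0 [])
        + (\<Sum>q\<in>UNIV - {\<rho>0 []}. hV \<delta> \<xi> q * F q)"
      unfolding sem_init_def by (rule sum.remove) simp_all
    also have "(\<Sum>q\<in>UNIV - {\<rho>0 []}. hV \<delta> \<xi> q * F q) = 0"
    proof (rule sum.neutral, rule ballI)
      fix q assume q: "q \<in> UNIV - {\<rho>0 []}"
      have "hV \<delta> \<xi> q = 0"
      proof (rule ccontr)
        assume "hV \<delta> \<xi> q \<noteq> 0"
        then obtain \<rho> where "\<rho> \<in> runs \<xi>" "wt \<delta> \<xi> \<rho> \<noteq> 0" "\<rho> [] = q" using M by blast
        then have "\<rho> = \<rho>0" using M r0 by blast
        then show False using q \<open>\<rho> [] = q\<close> by simp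
      qed
      then show "hV \<delta> \<xi> q * F q = 0" by simp
    qed
    also have "hV \<delta> \<xi> (\<rho>0 []) = wt \<delta> \<xi> \<rho>0" using M r0 by blast
    finally show ?thesis using R by simp
  next
    case False
    have R: "sem_run \<delta> F \<xi> = 0"
      unfolding sem_run_def using False by (intro sum.neutral) auto
    have "hV \<delta> \<xi> q = 0" for q using M False by blast
    then have "sem_init \<delta> F \<xi> = 0" unfolding sem_init_def by simp
    then show ?thesis using R by simp
  qed
qed

end
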